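(* Let $S_L\dot\cup S_R=\{1,\dots,d\}$ be an ordered partition, and for $\boldsymbol m\in\mathbb Z^d$ let $\tilde m_j=m_j$ if $j\in S_L$, $\tilde m_j=-m_j$ if $j\in S_R$. (1) For a finite $\mathcal F\subset\mathbb Z^d$ and $A_{\boldsymbol m}=Z_{\boldsymbol m}+W_{\boldsymbol m}\mathbf j\in\mathbb H^{m\times n}$ ($Z_{\boldsymbol m},W_{\boldsymbol m}\in\mathbb C_{\mathbf i}^{m\times n}$), the sandwich polynomial $p^{(S_L,S_R)}(\boldsymbol\theta)=\sum_{\boldsymbol m\in\mathcal F}e^{-\mathbf i\langle\boldsymbol m,\boldsymbol\theta\rangle_{S_L}}A_{\boldsymbol m}e^{-\mathbf i\langle\boldsymbol m,\boldsymbol\theta\rangle_{S_R}}$ satisfies $$p^{(S_L,S_R)}(\boldsymbol\theta)=\sum_{\boldsymbol m\in\mathcal F}\Bigl(Z_{\boldsymbol m}e^{-\mathbf i\langle\boldsymbol m,\boldsymbol\theta\rangle}+W_{\boldsymbol m}e^{-\mathbf i\langle\tilde{\boldsymbol m},\boldsymbol\theta\rangle}\mathbf j\Bigr).$$ (2) For $F=Z+W\mathbf j\in L^1(\mathbb T^d;\mathbb H^{m\times n})$ with $Z,W:\mathbb T^d\to\mathbb C_{\mathbf i}^{m\times n}$, one has $\widehat F^{(S_L,S_R)}(\boldsymbol m)=\widehat Z(\boldsymbol m)+\widehat W(\tilde{\boldsymbol m})\mathbf j$ for all $\boldsymbol m$, where $\widehat Z,\widehat W$ are the usual complex Fourier coefficients.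 (3) In particular $\widehat F_{\mathrm L}(\boldsymbol m)=\overline{\widehat{\overline F}_{\mathrm R}(-\boldsymbol m)}$, where $\overline{\,\cdot\,}$ denotes entrywise quaternion conjugation.
   Context: $\mathbb H$ is the quaternion algebra with units $\mathbf i,\mathbf j,\mathbf k=\mathbf i\mathbf j$; $\mathbb C_{\mathbf i}=\operatorname{span}_{\mathbb R}\{1,\mathbf i\}\cong\mathbb C$; quaternion conjugation is $\overline{q_0+q_1\mathbf i+q_2\mathbf j+q_3\mathbf k}=q_0-q_1\mathbf i-q_2\mathbf j-q_3\mathbf k$. $\mathbb T^d=[-\pi,\pi)^d$; $\langle\boldsymbol m,\boldsymbol\theta\rangle_S=\sum_{j\in S}m_j\theta_j$ and $\langle\boldsymbol m,\boldsymbol\theta\rangle=\sum_{j=1}^dm_j\theta_j$. Sandwich Fourier coefficients: $\widehat F^{(S_L,S_R)}(\boldsymbol m)=(2\pi)^{-d}\int_{\mathbb T^d}e^{-\mathbf i\langle\boldsymbol m,\boldsymbol\theta\rangle_{S_L}}F(\boldsymbol\theta)e^{-\mathbf i\langle\boldsymbol m,\boldsymbol\theta\rangle_{S_R}}d\boldsymbol\theta$. The left coefficient $\widehat F_{\mathrm L}$ is the case $S_L=\{1,\dots,d\},S_R=\varnothing$, the right coefficient $\widehat F_{\mathrm R}$ the case $S_L=\varnothing,S_R=\{1,\dots,d\}$. Complex Fourier coefficients: $\widehat G(\boldsymbol k)=(2\pi)^{-d}\int G(\boldsymbol\theta)e^{-\mathbf i\langle\boldsymbol k,\boldsymbol\theta\rangle}d\boldsymbol\theta$.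 *)

theory Defs
  imports "HOL-Analysis.Analysis"
begin

text \<open>Quaternions are modelled as real^4 with components (q0,q1,q2,q3) for
  q0 + q1 i + q2 j + q3 k; addition/scaling are the vector operations and the
  Hamilton product is qmul.\<close>

type_synonym quat = "real ^ 4"

definition qmul :: "quat \<Rightarrow> quat \<Rightarrow> quat" where
  "qmul p q = vector
     [ p$1*q$1 - p$2*q$2 - p$3*q$3 - p$4*q$4,
       p$1*q$2 + p$2*q$1 + p$3*q$4 - p$4*q$3,
       p$1*q$3 - p$2*q$4 + p$3*q$1 + p$4*q$2,
       p$1*q$4 + p$2*q$3 - p$3*q$2 + p$4*q$1 ]"

definition qconj :: "quat \<Rightarrow> quat" where
  "qconj q = vector [q$1, - q$2, - q$3, - q$4]"

definition cq :: "complex \<Rightarrow> quat" where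
  "cq z = vector [Re z, Im z, 0, 0]"

definition qj :: quat where
  "qj = vector [0, 0, 1, 0]"

definition torus :: "(real ^ 'd) set" where
  "torus = {\<theta>. \<forall>j. - pi \<le> \<theta>$j \<and> \<theta>$j < pi}"

definition pairS :: "'d set \<Rightarrow> int ^ 'd \<Rightarrow> real ^ 'd \<Rightarrow> real" where
  "pairS S m \<theta> = (\<Sum>j\<in>S. of_int (m$j) * \<theta>$j)"

definition pairF :: "int ^ 'd \<Rightarrow> real ^ 'd \<Rightarrow> real" where
  "pairF m \<theta> = (\<Sum>j\<in>UNIV. of_int (m$j) * \<theta>$j)"

definition tilde :: "'d set \<Rightarrow> int ^ 'd \<Rightarrow> int ^ 'd" where
  "tilde SL m = (\<chi> j. if j \<in> SL then m$j else - m$j)"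

definition sfourier :: "'d::finite set \<Rightarrow> 'd set \<Rightarrow> (real ^ 'd \<Rightarrow> quat ^ 'c ^ 'r)
     \<Rightarrow> int ^ 'd \<Rightarrow> quat ^ 'c ^ 'r" where
  "sfourier SL SR F m = (1 / (2 * pi)) ^ CARD('d) *\<^sub>R
     (LINT \<theta>:torus|lborel. (\<chi> r c. qmul (cq (cis (- pairS SL m \<theta>)))
                             (qmul (F \<theta> $ r $ c) (cq (cis (- pairS SR m \<theta>))))))"

abbreviation leftfourier where "leftfourier F \<equiv> sfourier UNIV {} F"
abbreviation rightfourier where "rightfourier F \<equiv> sfourier {} UNIV F"

definition cfourier :: "(real ^ 'd::finite \<Rightarrow> complex ^ 'c ^ 'r) \<Rightarrow> int ^ 'd \<Rightarrow> complex ^ 'c ^ 'r" where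
  "cfourier G k = (1 / (2 * pi)) ^ CARD('d) *\<^sub>R
     (LINT \<theta>:torus|lborel. (\<chi> r c. G \<theta> $ r $ c * cis (- pairF k \<theta>)))"

definition mconj :: "quat ^ 'c ^ 'r \<Rightarrow> quat ^ 'c ^ 'r" where
  "mconj M = (\<chi> r c. qconj (M $ r $ c))"

end

theory Submission
  imports Defs
begin

lemma vector_4 [simp]:
  "(vector[a,b,c,d] :: 'a::zero^4) $ 1 = a"
  "(vector[a,b,c,d] :: 'a::zero^4) $ 2 = b"
  "(vector[a,b,c,d] :: 'a::zero^4) $ 3 = c"
  "(vector[a,b,c,d] :: 'a::zero^4) $ 4 = d"
  unfolding vector_def by simp_all

lemma quat_eq: "(p::quat) = q \<longleftrightarrow> p$1 = q$1 \<and> p$2 = q$2 \<and> p$3 = q$3 \<and> p$4 = q$4"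
  by (simp add: vec_eq_iff forall_4)

lemma qcomp:
  "qmul p q $ 1 = p$1*q$1 - p$2*q$2 - p$3*q$3 - p$4*q$4"
  "qmul p q $ 2 = p$1*q$2 + p$2*q$1 + p$3*q$4 - p$4*q$3"
  "qmul p q $ 3 = p$1*q$3 - p$2*q$4 + p$3*q$1 + p$4*q$2"
  "qmul p q $ 4 = p$1*q$4 + p$2*q$3 - p$3*q$2 + p$4*q$1"
  "qconj q $ 1 = q$1" "qconj q $ 2 = - q$2" "qconj q $ 3 = - q$3" "qconj q $ 4 = - q$4"
  "cq z $ 1 = Re z" "cq z $ 2 = Im z" "cq z $ 3 = 0" "cq z $ 4 = 0"
  "qj $ 1 = 0" "qj $ 2 = 0" "qj $ 3 = 1" "qj $ 4 = 0"
  by (simp_all add: qmul_def qconj_def cq_def qj_def)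

lemma keyP:
  "qmul (cq (cis a)) (qmul (cq z + qmul (cq w) qj) (cq (cis b)))
   = cq (z * cis (a+b)) + qmul (cq (w * cis (a-b))) qj"
  by (simp add: quat_eq qcomp cos_add sin_add cos_diff sin_diff algebra_simps)

lemma keyC:
  "qconj (qmul (cq (cis 0)) (qmul (qconj q) (cq (cis s)))) = qmul (cq (cis (-s))) (qmul q (cq (cis 0)))"
  by (simp add: quat_eq qcomp algebra_simps)

lemma pair_sum:
  assumes "SL \<union> SR = UNIV" "SL \<inter> SR = {}"
  shows "pairS SL m \<theta> + pairS SR m \<theta> = pairF m \<theta>"
proof -
  have "pairF m \<theta> = (\<Sum>j\<in>SL \<union> SR. of_int (m$j) * \<theta>$j)" using assms(1) by (simp add: pairF_def)
  also have "\<dots> = pairS SL m \<theta> + pairS SR m \<theta>"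
    by (subst sum.union_disjoint) (use assms(2) in \<open>auto simp: pairS_def\<close>)
  finally show ?thesis by simp
qed

lemma pair_diff:
  assumes "SL \<union> SR = UNIV" "SL \<inter> SR = {}"
  shows "pairS SL m \<theta> - pairS SR m \<theta> = pairF (tilde SL m) \<theta>"
proof -
  have "pairF (tilde SL m) \<theta> = (\<Sum>j\<in>SL \<union> SR. of_int (tilde SL m $j) * \<theta>$j)" using assms(1) by (simp add: pairF_def)
  also have "\<dots> = (\<Sum>j\<in>SL. of_int (tilde SL m $j) * \<theta>$j) + (\<Sum>j\<in>SR. of_int (tilde SL m $j) * \<theta>$j)"
    by (subst sum.union_disjoint) (use assms(2) in auto)
  also have "(\<Sum>j\<in>SL. of_int (tilde SL m $j) * \<theta>$j) = pairS SL m \<theta>"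
    by (auto simp: pairS_def tilde_def intro!: sum.cong)
  also have "(\<Sum>j\<in>SR. of_int (tilde SL m $j) * \<theta>$j) = - pairS SR m \<theta>"
    using assms(2) by (auto simp: pairS_def tilde_def sum_negf[symmetric] intro!: sum.cong)
  finally show ?thesis by simp
qed

lemma part1:
  assumes part: "SL \<union> SR = UNIV" "SL \<inter> SR = {}"
  assumes A: "\<forall>m r c. A m $ r $ c = cq (Z m $ r $ c) + qmul (cq (W m $ r $ c)) qj"
  shows "(\<Sum>m\<in>Fs. (\<chi> r c. qmul (cq (cis (- pairS SL m \<theta>)))
                         (qmul (A m $ r $ c) (cq (cis (- pairS SR m \<theta>))))))
       = (\<Sum>m\<in>Fs. (\<chi> r c. cq (Z m $ r $ c * cis (- pairF m \<theta>))
                           + qmul (cq (W m $ r $ c * cis (- pairF (tilde SL m) \<theta>))) qj))"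
proof (rule sum.cong[OF refl])
  fix m
  have e1: "- pairS SL m \<theta> + - pairS SR m \<theta> = - pairF m \<theta>" using pair_sum[OF part, of m \<theta>] by linarith
  have e2: "- pairS SL m \<theta> - - pairS SR m \<theta> = - pairF (tilde SL m) \<theta>" using pair_diff[OF part, of m \<theta>] by simp
  show "(\<chi> r c. qmul (cq (cis (- pairS SL m \<theta>))) (qmul (A m $ r $ c) (cq (cis (- pairS SR m \<theta>))))) =
         (\<chi> r c. cq (Z m $ r $ c * cis (- pairF m \<theta>)) + qmul (cq (W m $ r $ c * cis (- pairF (tilde SL m) \<theta>))) qj)"
    by (simp only: A[rule_format] keyP e1 e2)
qed

lemma cq_add: "cq (x + y) = cq x + cq y" by (simp add: quat_eq qcomp)
lemma cq_scale: "cq (a *\<^sub>R x) = a *\<^sub>R cq x" by (simp add: quat_eq qcomp)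
lemma cq_zero: "cq 0 = 0" by (simp add: quat_eq qcomp)
lemma qmul_addL: "qmul (x + y) z = qmul x z + qmul y z" by (simp add: quat_eq qcomp algebra_simps)
lemma qmul_scaleL: "qmul (a *\<^sub>R x) z = a *\<^sub>R qmul x z" by (simp add: quat_eq qcomp algebra_simps)
lemma qconj_add: "qconj (x + y) = qconj x + qconj y" by (simp add: quat_eq qcomp)
lemma qconj_scale: "qconj (a *\<^sub>R x) = a *\<^sub>R qconj x" by (simp add: quat_eq qcomp)
lemma qconj_qconj: "qconj (qconj x) = x" by (simp add: quat_eq qcomp)

definition L1 :: "complex ^ 'c ^ 'r \<Rightarrow> quat ^ 'c ^ 'r" where
  "L1 X = (\<chi> r c. cq (X $ r $ c))"
definition L2 :: "complex ^ 'c ^ 'r \<Rightarrow> quat ^ 'c ^ 'r" where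
  "L2 X = (\<chi> r c. qmul (cq (X $ r $ c)) qj)"
definition P1 :: "quat \<Rightarrow> complex" where "P1 q = Complex (q$1) (q$2)"
definition P2 :: "quat \<Rightarrow> complex" where "P2 q = Complex (q$3) (q$4)"

lemma bl_L1: "bounded_linear (L1 :: complex ^ 'c::finite ^ 'r::finite \<Rightarrow> _)"
  unfolding linear_conv_bounded_linear[symmetric]
  by (rule linearI) (simp_all add: L1_def vec_eq_iff cq_add cq_scale)
lemma bl_L2: "bounded_linear (L2 :: complex ^ 'c::finite ^ 'r::finite \<Rightarrow> _)"
  unfolding linear_conv_bounded_linear[symmetric]
  by (rule linearI) (simp_all add: L2_def vec_eq_iff cq_add cq_scale qmul_addL qmul_scaleL)
lemma bl_mconj: "bounded_linear (mconj :: quat ^ 'c::finite ^ 'r::finite \<Rightarrow> _)"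
  unfolding linear_conv_bounded_linear[symmetric]
  by (rule linearI) (simp_all add: mconj_def vec_eq_iff qconj_add qconj_scale)
lemma bl_P1: "bounded_linear P1"
  unfolding linear_conv_bounded_linear[symmetric]
  by (rule linearI) (simp_all add: P1_def complex_eq_iff)
lemma bl_P2: "bounded_linear P2"
  unfolding linear_conv_bounded_linear[symmetric]
  by (rule linearI) (simp_all add: P2_def complex_eq_iff)
lemma bl_P1rc: "bounded_linear (\<lambda>M::quat ^ 'c::finite ^ 'r::finite. P1 (M $ r $ c))"
  using bounded_linear_compose[OF bl_P1 bounded_linear_compose[OF bounded_linear_vec_nth bounded_linear_vec_nth]] .
lemma bl_P2rc: "bounded_linear (\<lambda>M::quat ^ 'c::finite ^ 'r::finite. P2 (M $ r $ c))"
  using bounded_linear_compose[OF bl_P2 bounded_linear_compose[OF bounded_linear_vec_nth bounded_linear_vec_nth]] .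

lemma P1_split: "P1 (cq z + qmul (cq w) qj) = z" by (simp add: P1_def qcomp complex_eq_iff)
lemma P2_split: "P2 (cq z + qmul (cq w) qj) = w" by (simp add: P2_def qcomp complex_eq_iff)

lemma bl_axis: "bounded_linear (axis i :: 'b::euclidean_space \<Rightarrow> 'b ^ 'n::finite)"
  unfolding linear_conv_bounded_linear[symmetric]
  by (rule linearI) (simp_all add: axis_def vec_eq_iff)

lemma integrable_vec:
  fixes f :: "'a \<Rightarrow> 'b::euclidean_space ^ 'n::finite"
  assumes "\<And>i. integrable M (\<lambda>x. f x $ i)"
  shows "integrable M f"
proof -
  have eq: "f = (\<lambda>x. \<Sum>i\<in>UNIV. axis i (f x $ i))"
    by (auto simp: fun_eq_iff vec_eq_iff axis_def if_distrib sum.If_cases cong: if_cong)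
  have h: "integrable M (\<lambda>x. \<Sum>i\<in>UNIV. axis i (f x $ i))"
    by (rule Bochner_Integration.integrable_sum, rule integrable_bounded_linear[where f="\<lambda>x. f x $ _"], rule bl_axis, rule assms)
  show ?thesis using h unfolding eq[symmetric] .
qed

lemma integrable_bdd_mult:
  fixes f g :: "'a \<Rightarrow> complex"
  assumes "integrable M f" "g \<in> borel_measurable M" "\<And>x. norm (g x) \<le> 1"
  shows "integrable M (\<lambda>x. g x * f x)"
proof (rule Bochner_Integration.integrable_bound[OF assms(1)])
  show "(\<lambda>x. g x * f x) \<in> borel_measurable M"
    using assms(2) borel_measurable_integrable[OF assms(1)] by measurable
  show "AE x in M. norm (g x * f x) \<le> norm (f x)"
    using assms(3) by (auto simp: norm_mult intro!: mult_left_le_one_le)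
qed

lemma cis_meas: "(\<lambda>\<theta>. cis (- pairF (k::int^'d::finite) \<theta>)) \<in> borel_measurable lborel"
  unfolding pairF_def measurable_lborel2
  by (intro borel_measurable_continuous_onI continuous_intros)

lemma qmul_zeroL: "qmul 0 z = 0" by (simp add: quat_eq qcomp)

lemma int_H:
  fixes F :: "real ^ 'd::finite \<Rightarrow> quat ^ 'c::finite ^ 'r::finite"
    and Z :: "real ^ 'd \<Rightarrow> complex ^ 'c ^ 'r" and P :: "quat \<Rightarrow> complex"
  assumes P: "bounded_linear P" and Fi: "set_integrable lborel torus F"
    and dec: "\<forall>\<theta>\<in>torus. \<forall>r c. P (F \<theta> $ r $ c) = Z \<theta> $ r $ c"
  shows "integrable lborel (\<lambda>\<theta>. indicator torus \<theta> *\<^sub>R (\<chi> r c. Z \<theta> $ r $ c * cis (- pairF k \<theta>)))"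
proof (rule integrable_vec, rule integrable_vec)
  fix r c
  have Fi': "integrable lborel (\<lambda>\<theta>. indicator torus \<theta> *\<^sub>R F \<theta>)"
    using Fi by (simp add: set_integrable_def)
  have blP: "bounded_linear (\<lambda>M::quat ^ 'c ^ 'r. P (M $ r $ c))"
    using bounded_linear_compose[OF P bounded_linear_compose[OF bounded_linear_vec_nth bounded_linear_vec_nth]] .
  have i1: "integrable lborel (\<lambda>\<theta>. P ((indicator torus \<theta> *\<^sub>R F \<theta>) $ r $ c))"
    by (rule integrable_bounded_linear[OF blP Fi'])
  have i2: "integrable lborel (\<lambda>\<theta>. cis (- pairF k \<theta>) * P ((indicator torus \<theta> *\<^sub>R F \<theta>) $ r $ c))"
    by (rule integrable_bdd_mult[OF i1 cis_meas]) simp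
  have eq: "(\<lambda>\<theta>. (indicator torus \<theta> *\<^sub>R (\<chi> r c. Z \<theta> $ r $ c * cis (- pairF k \<theta>))) $ r $ c)
     = (\<lambda>\<theta>. cis (- pairF k \<theta>) * P ((indicator torus \<theta> *\<^sub>R F \<theta>) $ r $ c))"
  proof
    fix \<theta>
    show "(indicator torus \<theta> *\<^sub>R (\<chi> r c. Z \<theta> $ r $ c * cis (- pairF k \<theta>))) $ r $ c
       = cis (- pairF k \<theta>) * P ((indicator torus \<theta> *\<^sub>R F \<theta>) $ r $ c)"
    proof (cases "\<theta> \<in> torus")
      case True then show ?thesis using dec by simp
    next
      case False then show ?thesis using linear_0[OF bounded_linear.linear[OF P]] by simp
    qed
  qed
  show "integrable lborel (\<lambda>x. (indicator torus x *\<^sub>R (\<chi> r c. Z x $ r $ c * cis (- pairF k x))) $ r $ c)"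
    using i2 unfolding eq .
qed

lemma part2:
  fixes F :: "real ^ 'd::finite \<Rightarrow> quat ^ 'c::finite ^ 'r::finite"
    and Z W :: "real ^ 'd \<Rightarrow> complex ^ 'c ^ 'r"
  assumes part: "SL \<union> SR = UNIV" "SL \<inter> SR = {}"
    and Fi: "set_integrable lborel torus F"
    and dec: "\<forall>\<theta>\<in>torus. \<forall>r c. F \<theta> $ r $ c = cq (Z \<theta> $ r $ c) + qmul (cq (W \<theta> $ r $ c)) qj"
  shows "sfourier SL SR F m
             = (\<chi> r c. cq (cfourier Z m $ r $ c) + qmul (cq (cfourier W (tilde SL m) $ r $ c)) qj)"
proof -
  define HZ where "HZ = (\<lambda>\<theta>. indicator torus \<theta> *\<^sub>R (\<chi> r c. Z \<theta> $ r $ c * cis (- pairF m \<theta>)))"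
  define HW where "HW = (\<lambda>\<theta>. indicator torus \<theta> *\<^sub>R (\<chi> r c. W \<theta> $ r $ c * cis (- pairF (tilde SL m) \<theta>)))"
  define K where "K = (1 / (2 * pi)) ^ CARD('d)"
  have iZ: "integrable lborel HZ" unfolding HZ_def
    by (rule int_H[OF bl_P1 Fi]) (simp add: dec P1_split)
  have iW: "integrable lborel HW" unfolding HW_def
    by (rule int_H[OF bl_P2 Fi]) (simp add: dec P2_split)
  have pw: "indicator torus \<theta> *\<^sub>R (\<chi> r c. qmul (cq (cis (- pairS SL m \<theta>)))
       (qmul (F \<theta> $ r $ c) (cq (cis (- pairS SR m \<theta>))))) = L1 (HZ \<theta>) + L2 (HW \<theta>)" for \<theta>
  proof (cases "\<theta> \<in> torus")
    case True
    have e1: "- pairS SL m \<theta> + - pairS SR m \<theta> = - pairF m \<theta>" using pair_sum[OF part, of m \<theta>] by linarith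
    have e2: "- pairS SL m \<theta> - - pairS SR m \<theta> = - pairF (tilde SL m) \<theta>" using pair_diff[OF part, of m \<theta>] by simp
    have e1': "- pairS SL m \<theta> - pairS SR m \<theta> = - pairF m \<theta>" using e1 by simp
    have e2': "pairS SR m \<theta> - pairS SL m \<theta> = - pairF (tilde SL m) \<theta>" using e2 by simp
    show ?thesis using True
      by (simp add: dec keyP e1' e2' HZ_def HW_def L1_def L2_def vec_eq_iff)
  next
    case False
    then show ?thesis by (simp add: HZ_def HW_def L1_def L2_def vec_eq_iff cq_zero qmul_zeroL)
  qed
  have "integral\<^sup>L lborel (\<lambda>\<theta>. indicator torus \<theta> *\<^sub>R (\<chi> r c. qmul (cq (cis (- pairS SL m \<theta>)))
       (qmul (F \<theta> $ r $ c) (cq (cis (- pairS SR m \<theta>))))))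
     = integral\<^sup>L lborel (\<lambda>\<theta>. L1 (HZ \<theta>) + L2 (HW \<theta>))"
    by (simp only: pw)
  also have "\<dots> = integral\<^sup>L lborel (\<lambda>\<theta>. L1 (HZ \<theta>)) + integral\<^sup>L lborel (\<lambda>\<theta>. L2 (HW \<theta>))"
    by (rule Bochner_Integration.integral_add[OF integrable_bounded_linear[OF bl_L1 iZ] integrable_bounded_linear[OF bl_L2 iW]])
  also have "\<dots> = L1 (integral\<^sup>L lborel HZ) + L2 (integral\<^sup>L lborel HW)"
    by (simp add: integral_bounded_linear[OF bl_L1 iZ] integral_bounded_linear[OF bl_L2 iW])
  finally have I: "integral\<^sup>L lborel (\<lambda>\<theta>. indicator torus \<theta> *\<^sub>R (\<chi> r c. qmul (cq (cis (- pairS SL m \<theta>)))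
       (qmul (F \<theta> $ r $ c) (cq (cis (- pairS SR m \<theta>)))))) = L1 (integral\<^sup>L lborel HZ) + L2 (integral\<^sup>L lborel HW)" .
  have cZ: "cfourier Z m = K *\<^sub>R integral\<^sup>L lborel HZ"
    by (simp add: cfourier_def set_lebesgue_integral_def HZ_def K_def)
  have cW: "cfourier W (tilde SL m) = K *\<^sub>R integral\<^sup>L lborel HW"
    by (simp add: cfourier_def set_lebesgue_integral_def HW_def K_def)
  have "sfourier SL SR F m = K *\<^sub>R (L1 (integral\<^sup>L lborel HZ) + L2 (integral\<^sup>L lborel HW))"
    unfolding sfourier_def set_lebesgue_integral_def I K_def ..
  also have "\<dots> = (\<chi> r c. cq (cfourier Z m $ r $ c) + qmul (cq (cfourier W (tilde SL m) $ r $ c)) qj)"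
    by (simp add: cZ cW L1_def L2_def vec_eq_iff cq_scale qmul_scaleL scaleR_right_distrib)
  finally show ?thesis .
qed

lemma mconj_mconj: "mconj (mconj x) = x" by (simp add: mconj_def vec_eq_iff qconj_qconj)

lemma pairS_empty: "pairS {} m \<theta> = 0" by (simp add: pairS_def)

lemma part3:
  fixes F :: "real ^ 'd::finite \<Rightarrow> quat ^ 'c::finite ^ 'r::finite"
  shows "leftfourier F m = mconj (rightfourier (\<lambda>\<theta>. mconj (F \<theta>)) (- m))"
proof -
  define K where "K = (1 / (2 * pi)) ^ CARD('d)"
  have neg: "pairS UNIV (- m) \<theta> = - pairS UNIV m \<theta>" for \<theta> :: "real ^ 'd"
    by (simp add: pairS_def sum_negf[symmetric])
  have pw: "mconj (indicator torus \<theta> *\<^sub>R (\<chi> r c. qmul (cq (cis (- pairS {} (- m) \<theta>)))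
              (qmul (mconj (F \<theta>) $ r $ c) (cq (cis (- pairS UNIV (- m) \<theta>))))))
      = indicator torus \<theta> *\<^sub>R (\<chi> r c. qmul (cq (cis (- pairS UNIV m \<theta>)))
              (qmul (F \<theta> $ r $ c) (cq (cis (- pairS {} m \<theta>)))))" for \<theta>
    by (simp add: neg pairS_empty mconj_def vec_eq_iff forall_4 qcomp algebra_simps)
  have "mconj (rightfourier (\<lambda>\<theta>. mconj (F \<theta>)) (- m))
      = K *\<^sub>R mconj (integral\<^sup>L lborel (\<lambda>\<theta>. indicator torus \<theta> *\<^sub>R (\<chi> r c. qmul (cq (cis (- pairS {} (- m) \<theta>)))
              (qmul (mconj (F \<theta>) $ r $ c) (cq (cis (- pairS UNIV (- m) \<theta>)))))))"
    unfolding sfourier_def set_lebesgue_integral_def K_def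
    by (rule linear_scale[OF bounded_linear.linear[OF bl_mconj]])
  also have "\<dots> = K *\<^sub>R integral\<^sup>L lborel (\<lambda>\<theta>. mconj (indicator torus \<theta> *\<^sub>R (\<chi> r c. qmul (cq (cis (- pairS {} (- m) \<theta>)))
              (qmul (mconj (F \<theta>) $ r $ c) (cq (cis (- pairS UNIV (- m) \<theta>)))))))"
    by (subst integral_bounded_linear'[OF bl_mconj bl_mconj]) (auto simp: mconj_mconj)
  also have "\<dots> = leftfourier F m"
    unfolding pw sfourier_def set_lebesgue_integral_def K_def ..
  finally show ?thesis ..
qed

theorem mainTheorem4:
  fixes SL SR :: "'d::finite set"
  assumes part: "SL \<union> SR = UNIV" "SL \<inter> SR = {}"
  shows
   "(\<forall>(Fs :: (int ^ 'd) set) (A :: int ^ 'd \<Rightarrow> quat ^ 'c::finite ^ 'r::finite)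
       (Z :: int ^ 'd \<Rightarrow> complex ^ 'c ^ 'r) W (\<theta> :: real ^ 'd).
       finite Fs \<and>
       (\<forall>m r c. A m $ r $ c = cq (Z m $ r $ c) + qmul (cq (W m $ r $ c)) qj) \<longrightarrow>
       (\<Sum>m\<in>Fs. (\<chi> r c. qmul (cq (cis (- pairS SL m \<theta>)))
                         (qmul (A m $ r $ c) (cq (cis (- pairS SR m \<theta>))))))
       = (\<Sum>m\<in>Fs. (\<chi> r c. cq (Z m $ r $ c * cis (- pairF m \<theta>))
                           + qmul (cq (W m $ r $ c * cis (- pairF (tilde SL m) \<theta>))) qj)))
  \<and> (\<forall>(F :: real ^ 'd \<Rightarrow> quat ^ 'c ^ 'r) (Z :: real ^ 'd \<Rightarrow> complex ^ 'c ^ 'r) W.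
       set_integrable lborel torus F \<and>
       (\<forall>\<theta>\<in>torus. \<forall>r c. F \<theta> $ r $ c = cq (Z \<theta> $ r $ c) + qmul (cq (W \<theta> $ r $ c)) qj) \<longrightarrow>
       (\<forall>m. sfourier SL SR F m
             = (\<chi> r c. cq (cfourier Z m $ r $ c) + qmul (cq (cfourier W (tilde SL m) $ r $ c)) qj)))
  \<and> (\<forall>(F :: real ^ 'd \<Rightarrow> quat ^ 'c ^ 'r).
       set_integrable lborel torus F \<longrightarrow>
       (\<forall>m. leftfourier F m = mconj (rightfourier (\<lambda>\<theta>. mconj (F \<theta>)) (- m))))"
proof (intro conjI allI impI)
  fix Fs :: "(int ^ 'd) set" and A :: "int ^ 'd \<Rightarrow> quat ^ 'c ^ 'r"
    and Z :: "int ^ 'd \<Rightarrow> complex ^ 'c ^ 'r" and W and \<theta> :: "real ^ 'd"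
  assume h: "finite Fs \<and> (\<forall>m r c. A m $ r $ c = cq (Z m $ r $ c) + qmul (cq (W m $ r $ c)) qj)"
  show "(\<Sum>m\<in>Fs. (\<chi> r c. qmul (cq (cis (- pairS SL m \<theta>)))
                         (qmul (A m $ r $ c) (cq (cis (- pairS SR m \<theta>))))))
       = (\<Sum>m\<in>Fs. (\<chi> r c. cq (Z m $ r $ c * cis (- pairF m \<theta>))
                           + qmul (cq (W m $ r $ c * cis (- pairF (tilde SL m) \<theta>))) qj))"
    by (rule part1[OF part conjunct2[OF h]])
next
  fix F :: "real ^ 'd \<Rightarrow> quat ^ 'c ^ 'r" and Z :: "real ^ 'd \<Rightarrow> complex ^ 'c ^ 'r" and W m
  assume h: "set_integrable lborel torus F \<and>
       (\<forall>\<theta>\<in>torus. \<forall>r c. F \<theta> $ r $ c = cq (Z \<theta> $ r $ c) + qmul (cq (W \<theta> $ r $ c)) qj)"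
  show "sfourier SL SR F m
             = (\<chi> r c. cq (cfourier Z m $ r $ c) + qmul (cq (cfourier W (tilde SL m) $ r $ c)) qj)"
    by (rule part2[OF part conjunct1[OF h] conjunct2[OF h]])
next
  fix F :: "real ^ 'd \<Rightarrow> quat ^ 'c ^ 'r" and m
  show "leftfourier F m = mconj (rightfourier (\<lambda>\<theta>. mconj (F \<theta>)) (- m))"
    by (rule part3)
qed

end
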